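(* Let $\Gamma_1=(V_1,\nu_1,\mu_1)$ and $\Gamma_2=(V_2,\nu_2,\mu_2)$ be fuzzy graphs and $\Gamma=\Gamma_1\square\Gamma_2$ their Cartesian product. Then $$\sigma^*(\Gamma)=\sigma^*(\Gamma_1)+\sigma^*(\Gamma_2).$$
   Context: A fuzzy graph $\Gamma=(V,\nu,\mu)$ consists of a finite nonempty vertex set $V$, a map $\nu:V\to[0,1]$, and a symmetric map $\mu:V\times V\to[0,1]$ with $\mu(u,v)\le\min(\nu(u),\nu(v))$. The fuzzy degree is $d_\Gamma(v)=\sum_{u\ne v}\mu(v,u)$, the fuzzy size is $\mathrm{ew}(\Gamma)=\frac12\sum_v d_\Gamma(v)$, and with $n=|V|$, $\lambda=2\,\mathrm{ew}(\Gamma)/n$, the fuzzy sigma index is $\sigma^*(\Gamma)=\frac1n\sum_{v}(d_\Gamma(v)-\lambda)^2$. The Cartesian product $\Gamma_1\square\Gamma_2$ is the fuzzy graph on $V_1\times V_2$ whose edge membership is $\mu((u,v),(u,v'))=\mu_2(v,v')$ for $v\ne v'$, $\mu((u,v),(u',v))=\mu_1(u,u')$ for $u\neq u'$, and $0$ for all other pairs of distinct vertices, so that $d_\Gamma(u,v)=d_{\Gamma_1}(u)+d_{\Gamma_2}(v)$. *)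

theory Defs
  imports Complex_Main
begin

text \<open>A fuzzy graph is given by a vertex set V, a vertex membership nu and an
edge membership mu (only values on V are relevant).\<close>

definition fuzzy_graph :: "'a set \<Rightarrow> ('a \<Rightarrow> real) \<Rightarrow> ('a \<Rightarrow> 'a \<Rightarrow> real) \<Rightarrow> bool" where
  "fuzzy_graph V nu mu \<longleftrightarrow> finite V \<and> V \<noteq> {} \<and>
     (\<forall>v\<in>V. 0 \<le> nu v \<and> nu v \<le> 1) \<and>
     (\<forall>u\<in>V. \<forall>v\<in>V. 0 \<le> mu u v \<and> mu u v \<le> 1 \<and> mu u v = mu v u \<and>
                     mu u v \<le> min (nu u) (nu v))"

definition fdeg :: "'a set \<Rightarrow> ('a \<Rightarrow> 'a \<Rightarrow> real) \<Rightarrow> 'a \<Rightarrow> real" where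
  "fdeg V mu v = (\<Sum>u\<in>V - {v}. mu v u)"

definition fsize :: "'a set \<Rightarrow> ('a \<Rightarrow> 'a \<Rightarrow> real) \<Rightarrow> real" where
  "fsize V mu = (\<Sum>v\<in>V. fdeg V mu v) / 2"

definition fsigma :: "'a set \<Rightarrow> ('a \<Rightarrow> 'a \<Rightarrow> real) \<Rightarrow> real" where
  "fsigma V mu = (let n = real (card V); lam = 2 * fsize V mu / n in
                  (\<Sum>v\<in>V. (fdeg V mu v - lam)^2) / n)"

text \<open>Cartesian product. Vertex membership taken as the minimum (standard);
it does not affect the sigma index.\<close>

definition cart_nu :: "('a \<Rightarrow> real) \<Rightarrow> ('b \<Rightarrow> real) \<Rightarrow> ('a \<times> 'b \<Rightarrow> real)" where
  "cart_nu nu1 nu2 = (\<lambda>(u, v). min (nu1 u) (nu2 v))"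

definition cart_mu :: "('a \<Rightarrow> 'a \<Rightarrow> real) \<Rightarrow> ('b \<Rightarrow> 'b \<Rightarrow> real) \<Rightarrow>
    ('a \<times> 'b \<Rightarrow> 'a \<times> 'b \<Rightarrow> real)" where
  "cart_mu mu1 mu2 = (\<lambda>(u, v) (u', v').
     if u = u' \<and> v \<noteq> v' then mu2 v v'
     else if v = v' \<and> u \<noteq> u' then mu1 u u'
     else 0)"

end

theory Submission
  imports Defs
begin

definition var0 :: "'c set \<Rightarrow> ('c \<Rightarrow> real) \<Rightarrow> real" where
  "var0 A f = (\<Sum>x\<in>A. (f x - (\<Sum>y\<in>A. f y) / card A)^2) / card A"

lemma fsigma_var0: "fsigma V mu = var0 V (fdeg V mu)"
  unfolding fsigma_def var0_def fsize_def Let_def by simp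

lemma dev_zero:
  assumes "finite A" "A \<noteq> {}"
  shows "(\<Sum>x\<in>A. f x - (\<Sum>y\<in>A. f y) / card A) = (0::real)"
  using assms by (simp add: sum_subtractf)

lemma frac_aux:
  fixes p q X Y :: real
  assumes "p > 0" "q > 0"
  shows "(q * X + p * Y + 2 * 0 * 0) / (p * q) = X / p + Y / q"
  using assms by (simp add: field_simps)

lemma var0_cong:
  assumes "\<And>x. x \<in> A \<Longrightarrow> f x = g x"
  shows "var0 A f = var0 A g"
proof -
  have "sum f A = sum g A" using assms by (rule sum.cong[OF refl])
  then show ?thesis unfolding var0_def using assms by (simp cong: sum.cong)
qed

lemma var0_prod:
  fixes f :: "'a \<Rightarrow> real" and g :: "'b \<Rightarrow> real"
  assumes A: "finite A" "A \<noteq> {}" and B: "finite B" "B \<noteq> {}"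
  shows "var0 (A \<times> B) (\<lambda>(x,y). f x + g y) = var0 A f + var0 B g"
proof -
  define a where "a = (\<Sum>y\<in>A. f y) / card A"
  define b where "b = (\<Sum>y\<in>B. g y) / card B"
  have nA: "real (card A) > 0" using A by (simp add: card_gt_0_iff)
  have nB: "real (card B) > 0" using B by (simp add: card_gt_0_iff)
  have cAB: "real (card (A \<times> B)) = real (card A) * real (card B)"
    by (simp add: card_cartesian_product)
  have s: "(\<Sum>p\<in>A \<times> B. (\<lambda>(x,y). f x + g y) p) = card B * (\<Sum>y\<in>A. f y) + card A * (\<Sum>y\<in>B. g y)"
    by (simp add: sum.cartesian_product[symmetric] sum.distrib sum_distrib_left mult.commute)
      (simp add: sum.swap[of _ A B] sum_distrib_right)
  have mean: "(\<Sum>p\<in>A \<times> B. (\<lambda>(x,y). f x + g y) p) / card (A \<times> B) = a + b"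
    unfolding s cAB a_def b_def using nA nB by (simp add: field_simps)
  have za: "(\<Sum>x\<in>A. f x - a) = 0" unfolding a_def by (rule dev_zero[OF A])
  have zb: "(\<Sum>x\<in>B. g x - b) = 0" unfolding b_def by (rule dev_zero[OF B])
  have sq: "(\<Sum>p\<in>A \<times> B. ((\<lambda>(x,y). f x + g y) p - (a + b))^2)
      = card B * (\<Sum>x\<in>A. (f x - a)^2) + card A * (\<Sum>y\<in>B. (g y - b)^2)
        + 2 * (\<Sum>x\<in>A. f x - a) * (\<Sum>y\<in>B. g y - b)"
  proof -
    have "(\<Sum>p\<in>A \<times> B. ((\<lambda>(x,y). f x + g y) p - (a + b))^2)
        = (\<Sum>x\<in>A. \<Sum>y\<in>B. (f x - a)^2 + (g y - b)^2 + 2 * (f x - a) * (g y - b))"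
      unfolding sum.cartesian_product
      by (intro sum.cong refl) (clarsimp simp only: split_conv, algebra)
    also have "\<dots> = (\<Sum>x\<in>A. card B * (f x - a)^2 + (\<Sum>y\<in>B. (g y - b)^2) + 2 * (f x - a) * (\<Sum>y\<in>B. g y - b))"
      by (simp add: sum.distrib sum_distrib_left)
    also have "\<dots> = card B * (\<Sum>x\<in>A. (f x - a)^2) + card A * (\<Sum>y\<in>B. (g y - b)^2)
        + 2 * (\<Sum>x\<in>A. f x - a) * (\<Sum>y\<in>B. g y - b)"
      by (simp only: sum.distrib sum_constant mult.assoc sum_distrib_left[symmetric]
          sum_distrib_right[symmetric])
    finally show ?thesis .
  qed
  have "var0 (A \<times> B) (\<lambda>(x,y). f x + g y)
      = (\<Sum>p\<in>A \<times> B. ((\<lambda>(x,y). f x + g y) p - (a + b))^2) / card (A \<times> B)"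
    unfolding var0_def mean ..
  also have "\<dots> = var0 A f + var0 B g"
    unfolding sq za zb cAB var0_def a_def[symmetric] b_def[symmetric]
    by (rule frac_aux[OF nA nB])
  finally show ?thesis .
qed

lemma cart_mu_simp:
  "cart_mu mu1 mu2 (u, v) (u', v') =
     (if u = u' \<and> v \<noteq> v' then mu2 v v' else if v = v' \<and> u \<noteq> u' then mu1 u u' else 0)"
  unfolding cart_mu_def by simp

lemma fdeg_cart:
  assumes fin: "finite V1" "finite V2" and u: "u \<in> V1" and v: "v \<in> V2"
  shows "fdeg (V1 \<times> V2) (cart_mu mu1 mu2) (u, v) = fdeg V1 mu1 u + fdeg V2 mu2 v"
proof -
  let ?h = "cart_mu mu1 mu2 (u, v)"
  let ?P = "Pair u ` (V2 - {v})"
  let ?Q = "(\<lambda>x. (x, v)) ` (V1 - {u})"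
  have sub: "?P \<union> ?Q \<subseteq> V1 \<times> V2 - {(u, v)}" using u v by auto
  have "(\<Sum>p\<in>V1 \<times> V2 - {(u, v)}. ?h p) = (\<Sum>p\<in>?P \<union> ?Q. ?h p)"
  proof (rule sum.mono_neutral_right)
    show "finite (V1 \<times> V2 - {(u, v)})" using fin by simp
    show "?P \<union> ?Q \<subseteq> V1 \<times> V2 - {(u, v)}" by (rule sub)
    show "\<forall>p\<in>V1 \<times> V2 - {(u, v)} - (?P \<union> ?Q). ?h p = 0"
    proof
      fix p assume p: "p \<in> V1 \<times> V2 - {(u, v)} - (?P \<union> ?Q)"
      obtain x y where xy: "p = (x, y)" by (cases p)
      have pV: "x \<in> V1" "y \<in> V2" and pn: "p \<notin> ?P" "p \<notin> ?Q" using p xy by blast+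
      have n1: "\<not> (u = x \<and> v \<noteq> y)"
      proof
        assume c: "u = x \<and> v \<noteq> y"
        then have "y \<in> V2 - {v}" using pV by blast
        then have "Pair u y \<in> ?P" by (rule imageI)
        then show False using pn c xy by simp
      qed
      have n2: "\<not> (v = y \<and> u \<noteq> x)"
      proof
        assume c: "v = y \<and> u \<noteq> x"
        then have "x \<in> V1 - {u}" using pV by blast
        then have "(\<lambda>x. (x, v)) x \<in> ?Q" by (rule imageI)
        then show False using pn c xy by simp
      qed
      show "?h p = 0" unfolding xy cart_mu_simp by (simp only: if_not_P[OF n1] if_not_P[OF n2])
    qed
  qed
  also have "\<dots> = (\<Sum>p\<in>?P. ?h p) + (\<Sum>p\<in>?Q. ?h p)"
    by (rule sum.union_disjoint) (use fin in \<open>simp_all, blast\<close>)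
  finally have e0: "(\<Sum>p\<in>V1 \<times> V2 - {(u, v)}. ?h p) = (\<Sum>p\<in>?P. ?h p) + (\<Sum>p\<in>?Q. ?h p)" .
  have e1: "(\<Sum>p\<in>?P. ?h p) = (\<Sum>y\<in>V2 - {v}. ?h (u, y))"
    by (subst sum.reindex) (simp_all add: inj_on_def)
  have e2: "(\<Sum>y\<in>V2 - {v}. ?h (u, y)) = (\<Sum>y\<in>V2 - {v}. mu2 v y)"
    by (rule sum.cong) (auto simp: cart_mu_simp)
  have e3: "(\<Sum>p\<in>?Q. ?h p) = (\<Sum>x\<in>V1 - {u}. ?h (x, v))"
    by (subst sum.reindex) (simp_all add: inj_on_def)
  have e4: "(\<Sum>x\<in>V1 - {u}. ?h (x, v)) = (\<Sum>x\<in>V1 - {u}. mu1 u x)"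
    by (rule sum.cong) (auto simp: cart_mu_simp)
  show ?thesis unfolding fdeg_def e0 e1 e2 e3 e4 by simp
qed

theorem theorem2p6:
  fixes V1 :: "'a set" and nu1 :: "'a \<Rightarrow> real" and mu1 :: "'a \<Rightarrow> 'a \<Rightarrow> real"
    and V2 :: "'b set" and nu2 :: "'b \<Rightarrow> real" and mu2 :: "'b \<Rightarrow> 'b \<Rightarrow> real"
  assumes "fuzzy_graph V1 nu1 mu1" and "fuzzy_graph V2 nu2 mu2"
  shows "fsigma (V1 \<times> V2) (cart_mu mu1 mu2) = fsigma V1 mu1 + fsigma V2 mu2"
proof -
  have A: "finite V1" "V1 \<noteq> {}" and B: "finite V2" "V2 \<noteq> {}"
    using assms unfolding fuzzy_graph_def by auto
  have "var0 (V1 \<times> V2) (fdeg (V1 \<times> V2) (cart_mu mu1 mu2))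
      = var0 (V1 \<times> V2) (\<lambda>(x,y). fdeg V1 mu1 x + fdeg V2 mu2 y)"
  proof (rule var0_cong)
    fix p assume "p \<in> V1 \<times> V2"
    then obtain x y where "p = (x, y)" "x \<in> V1" "y \<in> V2" by blast
    then show "fdeg (V1 \<times> V2) (cart_mu mu1 mu2) p = (\<lambda>(x,y). fdeg V1 mu1 x + fdeg V2 mu2 y) p"
      using fdeg_cart[OF A(1) B(1)] by simp
  qed
  then show ?thesis
    by (simp add: fsigma_var0 var0_prod A B)
qed

end
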